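(* In the setting of the context, there exist $\bar k_\Psi\in\mathbb N$ and $\alpha_\Psi>0$ such that for every integer $k\ge\bar k_\Psi$, $\|\Psi^{(k)}\|_F\le\alpha_\Psi\,\|H^{(k)}_O\|_F\,\|H^{(k)}\|_F$, where $H^{(k)}:=Z^{(k)}-Z_\star$.
   Context: $\mathbb S^n$: real symmetric matrices, trace inner product, Frobenius norm; $\Pi_{\mathbb S^n_+}$ the projection onto the PSD cone. SDP pair: min $\langle C,X\rangle$ s.t. $\mathcal AX=b$, $X\succeq0$ / max $b^\top y$ s.t. $\mathcal A^*y+S=C$, $S\succeq0$, with $C,A_i\in\mathbb S^n$, $\mathcal AX=(\langle A_i,X\rangle)_i$ surjective, $\mathcal A^*y=\sum y_iA_i$, and a nonempty set of KKT points (primal–dual feasible with $\langle X,S\rangle=0$). $\mathcal P=\mathcal A^*(\mathcal A\mathcal A^* )^{-1}\mathcal A$. One-step ADMM with $\sigma>0$: $Z^{(k+1)}=\mathcal P(-2\Pi_{\mathbb S^n_+}(Z^{(k)})+Z^{(k)})+\Pi_{\mathbb S^n_+}(Z^{(k)})+\mathcal A^*(\mathcal A\mathcal A^* )^{-1}b+\sigma\mathcal PC-\sigma C$. Assume $Z^{(k)}\to Z_\star=X_\star-\sigma S_\star$ with $(X_\star,y_\star,S_\star)$ a KKT point satisfying $\operatorname{rank}X_\star+\operatorname{rank}S_\star=n$. Then $Z_\star=Q_\star\operatorname{diag}(\lambda_1,\dots,\lambda_n)Q_\star^\top$ for an orthogonal $Q_\star$, $\lambda_1\ge\dots\ge\lambda_r>0>\lambda_{r+1}\ge\dots\ge\lambda_n$,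 $r=\operatorname{rank}X_\star$. $\Theta_{ij}=\lambda_j/(\lambda_j-\lambda_{i+r})$ ($i\in[n-r],j\in[r]$), $\Omega=\begin{pmatrix}E_r&\Theta^\top\\\Theta&0\end{pmatrix}$, $\mathcal D(H)=Q_\star(\Omega\circ(Q_\star^\top HQ_\star))Q_\star^\top$ ($\circ$ Hadamard). $\Psi^{(k)}:=(\mathrm{Id}-2\mathcal P)\big(\Pi_{\mathbb S^n_+}(Z^{(k)})-\Pi_{\mathbb S^n_+}(Z_\star)-\mathcal D(Z^{(k)}-Z_\star)\big)$. For $H\in\mathbb S^n$, $H_O\in\mathbb R^{(n-r)\times r}$ denotes the lower-left block of $Q_\star^\top HQ_\star=\begin{pmatrix}H_X&H_O^\top\\H_O&H_S\end{pmatrix}$. *)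

theory Defs
  imports "HOL-Analysis.Analysis"
begin

text \<open>Matrices are real^'n^'n. On this type the library inner product is the
trace inner product sum_ij A_ij B_ij and the library norm is the Frobenius norm.\<close>

definition sym_mat :: "real^'n^'n \<Rightarrow> bool" where
  "sym_mat X \<longleftrightarrow> transpose X = X"

definition psd_cone :: "(real^'n^'n) set" where
  "psd_cone = {X. sym_mat X \<and> (\<forall>x. 0 \<le> x \<bullet> (X *v x))}"

definition proj_psd :: "real^'n^'n \<Rightarrow> real^'n^'n" where
  "proj_psd Z = (THE X. X \<in> psd_cone \<and> (\<forall>Y\<in>psd_cone. dist Z X \<le> dist Z Y))"

definition Aop :: "('m \<Rightarrow> real^'n^'n) \<Rightarrow> real^'n^'n \<Rightarrow> real^'m" where
  "Aop A X = (\<chi> i. A i \<bullet> X)"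

definition Aadj :: "('m::finite \<Rightarrow> real^'n^'n) \<Rightarrow> real^'m \<Rightarrow> real^'n^'n" where
  "Aadj A y = (\<Sum>i\<in>UNIV. (y $ i) *\<^sub>R A i)"

definition AAadj :: "('m::finite \<Rightarrow> real^'n^'n) \<Rightarrow> real^'m^'m" where
  "AAadj A = (\<chi> i j. A i \<bullet> A j)"

definition Pop :: "('m::finite \<Rightarrow> real^'n^'n) \<Rightarrow> real^'n^'n \<Rightarrow> real^'n^'n" where
  "Pop A H = Aadj A (matrix_inv (AAadj A) *v Aop A H)"

definition admm_step :: "('m::finite \<Rightarrow> real^'n^'n) \<Rightarrow> real^'m \<Rightarrow> real^'n^'n \<Rightarrow> real
    \<Rightarrow> real^'n^'n \<Rightarrow> real^'n^'n" where
  "admm_step A b C \<sigma> Z =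
     Pop A (Z - 2 *\<^sub>R proj_psd Z) + proj_psd Z + Aadj A (matrix_inv (AAadj A) *v b)
     + \<sigma> *\<^sub>R Pop A C - \<sigma> *\<^sub>R C"

definition KKT :: "('m::finite \<Rightarrow> real^'n^'n) \<Rightarrow> real^'m \<Rightarrow> real^'n^'n
    \<Rightarrow> real^'n^'n \<Rightarrow> real^'m \<Rightarrow> real^'n^'n \<Rightarrow> bool" where
  "KKT A b C X y S \<longleftrightarrow> X \<in> psd_cone \<and> Aop A X = b \<and> S \<in> psd_cone
     \<and> Aadj A y + S = C \<and> X \<bullet> S = 0"

text \<open>Omega: indices with lam > 0 form the X-block (first r indices), indices with
lam < 0 form the S-block.\<close>
definition Omega :: "('n \<Rightarrow> real) \<Rightarrow> 'n \<Rightarrow> 'n \<Rightarrow> real" where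
  "Omega lam a b =
     (if 0 < lam a \<and> 0 < lam b then 1
      else if lam a < 0 \<and> 0 < lam b then lam b / (lam b - lam a)
      else if 0 < lam a \<and> lam b < 0 then lam a / (lam a - lam b)
      else 0)"

definition Dop :: "real^'n^'n \<Rightarrow> ('n \<Rightarrow> real) \<Rightarrow> real^'n^'n \<Rightarrow> real^'n^'n" where
  "Dop Q lam H = Q ** (\<chi> a b. Omega lam a b * (transpose Q ** H ** Q) $ a $ b) ** transpose Q"

definition HO_norm :: "real^'n^'n \<Rightarrow> ('n \<Rightarrow> real) \<Rightarrow> real^'n^'n \<Rightarrow> real" where
  "HO_norm Q lam H =
     sqrt (\<Sum>a\<in>{a. lam a < 0}. \<Sum>b\<in>{b. 0 < lam b}. ((transpose Q ** H ** Q) $ a $ b)\<^sup>2)"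

definition diag_mat :: "('n \<Rightarrow> real) \<Rightarrow> real^'n^'n" where
  "diag_mat lam = (\<chi> i j. if i = j then lam i else 0)"

end

theory Submission
  imports Defs
begin

lemma mm_entry: "((A::real^'n^'n) ** B) $ i $ j = (\<Sum>k\<in>UNIV. A$i$k * B$k$j)"
  by (simp add: matrix_matrix_mult_def)

lemma mm_add_r: "((A::real^'n^'n) + B) ** C = A ** C + B ** C"
  by (simp add: vec_eq_iff mm_entry distrib_right sum.distrib)
lemma mm_diff_r: "((A::real^'n^'n) - B) ** C = A ** C - B ** C"
  by (simp add: vec_eq_iff mm_entry left_diff_distrib sum_subtractf)
lemma mm_diff_l: "(C::real^'n^'n) ** (A - B) = C ** A - C ** B"
  by (simp add: vec_eq_iff mm_entry right_diff_distrib sum_subtractf)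
lemma mm_neg_l: "(- (A::real^'n^'n)) ** B = - (A ** B)"
  by (simp add: vec_eq_iff mm_entry sum_negf)
lemma mm_neg_r: "(A::real^'n^'n) ** (- B) = - (A ** B)"
  by (simp add: vec_eq_iff mm_entry sum_negf)
lemma transpose_add: "transpose ((A::real^'n^'n) + B) = transpose A + transpose B"
  by (simp add: vec_eq_iff transpose_def)
lemma transpose_diff: "transpose ((A::real^'n^'n) - B) = transpose A - transpose B"
  by (simp add: vec_eq_iff transpose_def)
lemma transpose_neg: "transpose (- (A::real^'n^'n)) = - transpose A"
  by (simp add: vec_eq_iff transpose_def)
lemma transpose_entry: "transpose (A::real^'n^'n) $ i $ j = A $ j $ i"
  by (simp add: transpose_def)

lemma sym_mat_iff: "sym_mat (X::real^'n^'n) \<longleftrightarrow> (\<forall>i j. X$i$j = X$j$i)"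
  unfolding sym_mat_def by (auto simp: vec_eq_iff transpose_def)

lemma inner_mat: "(A::real^'n^'n) \<bullet> B = (\<Sum>i\<in>UNIV. \<Sum>j\<in>UNIV. A$i$j * B$i$j)"
  by (simp add: inner_vec_def)

lemma norm_sq_mat: "(norm (A::real^'n^'n))\<^sup>2 = (\<Sum>i\<in>UNIV. \<Sum>j\<in>UNIV. (A$i$j)\<^sup>2)"
  by (simp only: power2_norm_eq_inner inner_mat) (simp add: power2_eq_square)

lemma norm_sq_vec: "(norm (v::real^'n))\<^sup>2 = (\<Sum>j\<in>UNIV. (v$j)\<^sup>2)"
  by (simp only: power2_norm_eq_inner) (simp add: inner_vec_def power2_eq_square)

lemma inner_trace: "(A::real^'n^'n) \<bullet> B = trace (transpose A ** B)"
  by (simp add: inner_mat trace_def mm_entry transpose_def) (rule sum.swap)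

lemma norm_entry_mono:
  assumes "\<And>i j. c * \<bar>(A::real^'n^'n)$i$j\<bar> \<le> \<bar>B$i$j\<bar>" "0 \<le> c"
  shows "c * norm A \<le> norm B"
proof -
  have "(c * norm A)\<^sup>2 = (\<Sum>i\<in>UNIV. \<Sum>j\<in>UNIV. (c * A$i$j)\<^sup>2)"
    by (simp add: power_mult_distrib norm_sq_mat sum_distrib_left)
  also have "\<dots> \<le> (\<Sum>i\<in>UNIV. \<Sum>j\<in>UNIV. (B$i$j)\<^sup>2)"
  proof (intro sum_mono)
    fix i j
    have "\<bar>c * A$i$j\<bar> \<le> \<bar>B$i$j\<bar>" using assms by (simp add: abs_mult)
    then show "(c * A$i$j)\<^sup>2 \<le> (B$i$j)\<^sup>2" by (simp add: abs_le_square_iff)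
  qed
  also have "\<dots> = (norm B)\<^sup>2" by (simp add: norm_sq_mat)
  finally show ?thesis by (rule power2_le_imp_le) simp
qed

lemma norm_entry_le:
  assumes "\<And>i j. \<bar>(A::real^'n^'n)$i$j\<bar> \<le> \<bar>B$i$j\<bar>"
  shows "norm A \<le> norm B"
  using norm_entry_mono[of 1 A B] assms by simp

lemma norm_transpose: "norm (transpose (A::real^'n^'n)) = norm A"
proof -
  have "(norm (transpose A))\<^sup>2 = (norm A)\<^sup>2"
    by (simp add: norm_sq_mat transpose_def) (rule sum.swap)
  then show ?thesis by simp
qed

lemma norm_mm: "norm ((A::real^'n^'n) ** (B::real^'n^'n)) \<le> norm A * norm B"
proof -
  have "(norm (A ** B))\<^sup>2 = (\<Sum>i\<in>UNIV. \<Sum>j\<in>UNIV. ((A$i) \<bullet> column j B)\<^sup>2)"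
    by (simp only: norm_sq_mat) (simp add: mm_entry inner_vec_def column_def)
  also have "\<dots> \<le> (\<Sum>i\<in>UNIV. \<Sum>j\<in>UNIV. (norm (A$i))\<^sup>2 * (norm (column j B))\<^sup>2)"
  proof (intro sum_mono)
    fix i j
    have "\<bar>(A$i) \<bullet> column j B\<bar> \<le> norm (A$i) * norm (column j B)"
      by (rule Cauchy_Schwarz_ineq2)
    then have "((A$i) \<bullet> column j B)\<^sup>2 \<le> (norm (A$i) * norm (column j B))\<^sup>2"
      by (metis abs_ge_zero power2_abs power_mono)
    then show "((A$i) \<bullet> column j B)\<^sup>2 \<le> (norm (A$i))\<^sup>2 * (norm (column j B))\<^sup>2"
      by (simp add: power_mult_distrib)
  qed
  also have "\<dots> = (\<Sum>i\<in>UNIV. (norm (A$i))\<^sup>2) * (\<Sum>j\<in>UNIV. (norm (column j B))\<^sup>2)"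
    by (simp add: sum_product)
  also have "(\<Sum>i\<in>UNIV. (norm (A$i))\<^sup>2) = (norm A)\<^sup>2"
    by (simp only: norm_sq_mat norm_sq_vec)
  also have "(\<Sum>j\<in>UNIV. (norm (column j B))\<^sup>2) = (norm B)\<^sup>2"
    by (simp only: norm_sq_mat norm_sq_vec) (simp add: column_def, rule sum.swap)
  finally have "(norm (A ** B))\<^sup>2 \<le> (norm A * norm B)\<^sup>2" by (simp add: power_mult_distrib)
  then show ?thesis by (rule power2_le_imp_le) simp
qed

lemma diag_mm: "(diag_mat d ** (M::real^'n^'n)) $ i $ j = d i * M$i$j"
  by (simp add: mm_entry diag_mat_def if_distrib if_distribR sum.delta cong: if_cong)
lemma mm_diag: "((M::real^'n^'n) ** diag_mat d) $ i $ j = M$i$j * d j"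
  by (simp add: mm_entry diag_mat_def if_distrib if_distribR sum.delta' cong: if_cong)
lemma diag_entry: "diag_mat d $ i $ j = (if i = j then d i else 0)"
  by (simp add: diag_mat_def)
lemma transpose_diag: "transpose (diag_mat d) = diag_mat d"
  by (simp add: vec_eq_iff transpose_def diag_mat_def)

lemma norm_orth_l:
  assumes "orthogonal_matrix Q" shows "norm (Q ** (M::real^'n^'n)) = norm M"
proof -
  have "(norm (Q ** M))\<^sup>2 = (norm M)\<^sup>2"
    using assms
    by (simp add: power2_norm_eq_inner inner_trace matrix_transpose_mul matrix_mul_assoc
        orthogonal_matrix_def)
       (simp add: matrix_mul_assoc[symmetric])
  then show ?thesis by simp
qed

lemma norm_orth_r:
  assumes "orthogonal_matrix Q" shows "norm ((M::real^'n^'n) ** Q) = norm M"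
proof -
  have "trace (transpose Q ** transpose M ** M ** Q) = trace (transpose M ** M ** Q ** transpose Q)"
    by (metis trace_mul_sym matrix_mul_assoc)
  then have "(norm (M ** Q))\<^sup>2 = (norm M)\<^sup>2"
    using assms
    by (simp add: power2_norm_eq_inner inner_trace matrix_transpose_mul matrix_mul_assoc
        orthogonal_matrix_def)
       (simp add: matrix_mul_assoc[symmetric])
  then show ?thesis by simp
qed

lemma dot_mv: "x \<bullet> ((A::real^'n^'n) *v y) = (transpose A *v x) \<bullet> y"
  by (simp add: inner_vec_def matrix_vector_mult_def transpose_def sum_distrib_left
      sum_distrib_right mult_ac) (rule sum.swap)

lemma scaleR_mv: "((c::real) *\<^sub>R (A::real^'n^'n)) *v x = c *\<^sub>R (A *v x)"
  by (simp add: vec_eq_iff matrix_vector_mult_def sum_distrib_left mult.assoc)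

lemma psd_sym: "X \<in> psd_cone \<Longrightarrow> transpose X = X"
  by (simp add: psd_cone_def sym_mat_def)

lemma psd_nonneg: "X \<in> psd_cone \<Longrightarrow> 0 \<le> x \<bullet> (X *v x)"
  by (simp add: psd_cone_def)

lemma linear_transpose_mat: "linear (transpose :: real^'n^'n \<Rightarrow> real^'n^'n)"
  by (rule linearI) (simp_all add: transpose_add transpose_scalar)

lemma linear_quad: "linear (\<lambda>X::real^'n^'n. x \<bullet> (X *v x))"
  by (rule linearI) (simp_all add: matrix_vector_mult_add_rdistrib inner_add_right scaleR_mv)

lemma closed_psd: "closed (psd_cone :: (real^'n^'n) set)"
proof -
  have eq: "(psd_cone :: (real^'n^'n) set) =
      {X. transpose X = X} \<inter> (\<Inter>x. {X. 0 \<le> x \<bullet> (X *v x)})"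
    by (auto simp: psd_cone_def sym_mat_def)
  have c1: "continuous_on UNIV (transpose :: real^'n^'n \<Rightarrow> real^'n^'n)"
    by (rule linear_continuous_on) (simp add: linear_conv_bounded_linear[symmetric] linear_transpose_mat)
  have c2: "continuous_on UNIV (\<lambda>X::real^'n^'n. x \<bullet> (X *v x))" for x
    by (rule linear_continuous_on) (simp add: linear_conv_bounded_linear[symmetric] linear_quad)
  have "closed {X::real^'n^'n. transpose X = X}"
    using closed_Collect_eq[OF c1 continuous_on_id] by simp
  moreover have "closed {X::real^'n^'n. 0 \<le> x \<bullet> (X *v x)}" for x
    using closed_Collect_le[OF continuous_on_const c2[of x]] by simp
  ultimately show ?thesis unfolding eq by auto
qed

lemma convex_psd: "convex (psd_cone :: (real^'n^'n) set)"
proof (rule convexI)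
  fix X Y :: "real^'n^'n" and u v :: real
  assume XY: "X \<in> psd_cone" "Y \<in> psd_cone" and uv0: "0 \<le> u" "0 \<le> v" "u + v = 1"
  then have uv: "0 \<le> u \<and> 0 \<le> v \<and> u + v = 1" by simp
  have "transpose (u *\<^sub>R X + v *\<^sub>R Y) = u *\<^sub>R X + v *\<^sub>R Y"
    using XY by (simp add: transpose_add transpose_scalar psd_sym)
  moreover have "0 \<le> x \<bullet> ((u *\<^sub>R X + v *\<^sub>R Y) *v x)" for x
    using XY uv psd_nonneg[of X x] psd_nonneg[of Y x]
    by (simp add: matrix_vector_mult_add_rdistrib inner_add_right scaleR_mv)
  ultimately show "u *\<^sub>R X + v *\<^sub>R Y \<in> psd_cone"
    by (simp add: psd_cone_def sym_mat_def)
qed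

lemma zero_psd: "0 \<in> psd_cone"
  by (simp add: psd_cone_def sym_mat_def vec_eq_iff transpose_def)

lemma proj_eq_cp: "proj_psd Z = closest_point psd_cone Z"
  unfolding proj_psd_def
proof (rule the_equality)
  show "closest_point psd_cone Z \<in> psd_cone \<and>
        (\<forall>Y\<in>psd_cone. dist Z (closest_point psd_cone Z) \<le> dist Z Y)"
    using closest_point_exists[OF closed_psd] zero_psd by blast
  fix X assume "X \<in> psd_cone \<and> (\<forall>Y\<in>psd_cone. dist Z X \<le> dist Z Y)"
  then show "X = closest_point psd_cone Z"
    using closest_point_unique[OF convex_psd closed_psd] by blast
qed

lemma proj_in: "proj_psd Z \<in> psd_cone"
  unfolding proj_eq_cp using closest_point_exists[OF closed_psd] zero_psd by blast

lemma proj_dot: "W \<in> psd_cone \<Longrightarrow> (Z - proj_psd Z) \<bullet> (W - proj_psd Z) \<le> 0"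
  unfolding proj_eq_cp by (rule closest_point_dot[OF convex_psd closed_psd])

lemma proj_lip: "norm (proj_psd Z1 - proj_psd Z2) \<le> norm (Z1 - Z2)"
  unfolding proj_eq_cp using closest_point_lipschitz[OF convex_psd closed_psd, of Z1 Z2] zero_psd
  by (auto simp: dist_norm)

lemma proj_unique:
  assumes "X \<in> psd_cone" "\<And>W. W \<in> psd_cone \<Longrightarrow> (Z - X) \<bullet> (W - X) \<le> 0"
  shows "proj_psd Z = X"
proof -
  have "dist Z X \<le> dist Z W" if "W \<in> psd_cone" for W
  proof -
    have "(dist Z W)\<^sup>2 = (norm ((Z - X) - (W - X)))\<^sup>2" by (simp add: dist_norm)
    also have "\<dots> = (norm (Z - X))\<^sup>2 + (norm (W - X))\<^sup>2 - 2 * ((Z - X) \<bullet> (W - X))"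
      by (simp add: power2_norm_eq_inner inner_diff_left inner_diff_right inner_commute)
    also have "\<dots> \<ge> (norm (Z - X))\<^sup>2"
    proof -
      have "0 \<le> (norm (W - X))\<^sup>2" by simp
      then show ?thesis using assms(2)[OF that] by linarith
    qed
    finally have "(dist Z X)\<^sup>2 \<le> (dist Z W)\<^sup>2" by (simp add: dist_norm)
    then show ?thesis by (rule power2_le_imp_le) simp
  qed
  then show ?thesis
    unfolding proj_eq_cp using closest_point_unique[OF convex_psd closed_psd assms(1)] by metis
qed

lemma quad_zero_aux:
  fixes a b :: real
  assumes "\<And>t. 0 \<le> 2 * t * a + t\<^sup>2 * b"
  shows "a = 0"
proof (rule ccontr)
  assume "a \<noteq> 0"
  define t where "t = - a / (\<bar>b\<bar> + 1)"
  have pos: "\<bar>b\<bar> + 1 > 0" by simp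
  have "t\<^sup>2 * b \<le> t\<^sup>2 * \<bar>b\<bar>" by (simp add: mult_left_mono)
  also have "\<dots> = a\<^sup>2 * \<bar>b\<bar> / (\<bar>b\<bar> + 1)\<^sup>2" by (simp add: t_def power_divide)
  also have "\<dots> = (a\<^sup>2 / (\<bar>b\<bar> + 1)) * (\<bar>b\<bar> / (\<bar>b\<bar> + 1))"
    by (simp add: power2_eq_square)
  also have "\<dots> \<le> (a\<^sup>2 / (\<bar>b\<bar> + 1)) * 1"
    by (rule mult_left_mono) (use pos in auto)
  finally have "2 * t * a + t\<^sup>2 * b \<le> - 2 * a\<^sup>2 / (\<bar>b\<bar> + 1) + a\<^sup>2 / (\<bar>b\<bar> + 1)"
    by (simp add: t_def power2_eq_square)
  also have "\<dots> = - (a\<^sup>2 / (\<bar>b\<bar> + 1))" by (simp add: divide_inverse algebra_simps)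
  also have "\<dots> < 0" using \<open>a \<noteq> 0\<close> pos by simp
  finally show False using assms[of t] by simp
qed

lemma psd_null:
  assumes "X \<in> psd_cone" "x \<bullet> (X *v x) = 0"
  shows "X *v x = 0"
proof -
  let ?y = "X *v x"
  have "0 \<le> 2 * t * (?y \<bullet> ?y) + t\<^sup>2 * (?y \<bullet> (X *v ?y))" for t
  proof -
    have "0 \<le> (x + t *\<^sub>R ?y) \<bullet> (X *v (x + t *\<^sub>R ?y))" using assms(1) by (rule psd_nonneg)
    also have "\<dots> = x \<bullet> (X *v x) + t * (x \<bullet> (X *v ?y)) + t * (?y \<bullet> ?y) + t\<^sup>2 * (?y \<bullet> (X *v ?y))"
      by (simp only: matrix_vector_right_distrib matrix_vector_mult_scaleR inner_add_left
          inner_add_right inner_scaleR_left inner_scaleR_right power2_eq_square)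
         (simp add: algebra_simps)
    also have "x \<bullet> (X *v ?y) = ?y \<bullet> ?y"
      by (simp only: dot_mv psd_sym[OF assms(1)])
    finally show ?thesis using assms(2) by simp
  qed
  then have "?y \<bullet> ?y = 0" by (intro quad_zero_aux) auto
  then show ?thesis by simp
qed

lemma inner_transpose_both: "transpose (A::real^'n^'n) \<bullet> transpose B = A \<bullet> B"
  by (simp add: inner_mat transpose_def) (rule sum.swap)

lemma inner_mm_columns:
  "(Y::real^'n^'n) \<bullet> (X ** Y) = (\<Sum>j\<in>UNIV. column j Y \<bullet> (X *v column j Y))"
  by (simp add: inner_mat inner_vec_def mm_entry column_def matrix_vector_mult_def
      sum_distrib_left) (rule sum.swap)

lemma mm_column: "((X::real^'n^'n) ** Y) $ i $ j = (X *v column j Y) $ i"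
  by (simp add: mm_entry matrix_vector_mult_def column_def)

lemma proj_compl:
  assumes symZ: "transpose Z = Z"
  defines "X \<equiv> proj_psd Z"
  defines "Y \<equiv> X - Z"
  shows "X ** Y = 0"
proof -
  have Xp: "X \<in> psd_cone" unfolding X_def by (rule proj_in)
  have sX: "transpose X = X" using Xp by (rule psd_sym)
  have sY: "transpose Y = Y" unfolding Y_def by (simp add: transpose_diff sX symZ)
  define a where "a = Y \<bullet> (X ** Y)"
  define c where "c = Y \<bullet> (Y ** X ** Y)"
  have key: "0 \<le> - 2 * s * a + s\<^sup>2 * c" if "s > 0" for s
  proof -
    define W where "W = (mat 1 - s *\<^sub>R Y) ** X ** (mat 1 - s *\<^sub>R Y)"
    have tA: "transpose (mat 1 - s *\<^sub>R Y) = mat 1 - s *\<^sub>R Y"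
      by (simp add: transpose_diff transpose_scalar sY)
    have e1: "(mat 1 - s *\<^sub>R Y) ** X = X - s *\<^sub>R (Y ** X)"
      by (simp add: mm_diff_r scalar_matrix_assoc[symmetric])
    have e2: "(X - s *\<^sub>R (Y ** X)) ** (mat 1 - s *\<^sub>R Y)
        = X - s *\<^sub>R (X ** Y) - s *\<^sub>R (Y ** X) + (s * s) *\<^sub>R (Y ** X ** Y)"
      by (simp add: mm_diff_r mm_diff_l matrix_scalar_ac scalar_matrix_assoc[symmetric]
          scaleR_diff_right)
    have Wexp: "W = X - s *\<^sub>R (X ** Y) - s *\<^sub>R (Y ** X) + (s * s) *\<^sub>R (Y ** X ** Y)"
      unfolding W_def e1 e2 ..
    have "transpose W = W"
      unfolding W_def
      by (simp add: matrix_transpose_mul tA sX matrix_mul_assoc)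
    moreover have "0 \<le> x \<bullet> (W *v x)" for x
    proof -
      have "x \<bullet> (W *v x) = x \<bullet> ((mat 1 - s *\<^sub>R Y) *v (X *v ((mat 1 - s *\<^sub>R Y) *v x)))"
        by (simp only: W_def matrix_vector_mul_assoc matrix_mul_assoc)
      also have "\<dots> = (transpose (mat 1 - s *\<^sub>R Y) *v x) \<bullet> (X *v ((mat 1 - s *\<^sub>R Y) *v x))"
        by (rule dot_mv)
      finally have "x \<bullet> (W *v x) = ((mat 1 - s *\<^sub>R Y) *v x) \<bullet> (X *v ((mat 1 - s *\<^sub>R Y) *v x))"
        by (simp only: tA)
      then show ?thesis using psd_nonneg[OF Xp] by simp
    qed
    ultimately have "W \<in> psd_cone" by (simp add: psd_cone_def sym_mat_def)
    from proj_dot[OF this, of Z] have "(Z - X) \<bullet> (W - X) \<le> 0" unfolding X_def .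
    moreover have "Z - X = - Y" unfolding Y_def by simp
    ultimately have ge: "0 \<le> Y \<bullet> (W - X)" by simp
    have yy: "Y \<bullet> (Y ** X) = Y \<bullet> (X ** Y)"
      using inner_transpose_both[of Y "Y ** X"] by (simp add: matrix_transpose_mul sX sY)
    have wx: "W - X = (s * s) *\<^sub>R (Y ** X ** Y) - s *\<^sub>R (X ** Y) - s *\<^sub>R (Y ** X)"
      unfolding Wexp by (simp add: algebra_simps)
    have "Y \<bullet> (W - X) = - 2 * s * a + s\<^sup>2 * c"
      unfolding a_def c_def wx
      by (simp only: inner_diff_right inner_scaleR_right power2_eq_square yy)
    then show ?thesis using ge by simp
  qed
  have "a \<le> 0"
  proof (rule ccontr)
    assume "\<not> a \<le> 0"
    define s where "s = a / (\<bar>c\<bar> + 1)"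
    have s0: "s > 0" using \<open>\<not> a \<le> 0\<close> by (simp add: s_def)
    have "s\<^sup>2 * c \<le> s * (s * \<bar>c\<bar>)" using s0 by (simp add: power2_eq_square mult_left_mono)
    also have "s * \<bar>c\<bar> \<le> a" using \<open>\<not> a \<le> 0\<close> by (simp add: s_def field_simps)
    then have "s * (s * \<bar>c\<bar>) \<le> s * a" using s0 by (simp add: mult_left_mono)
    finally have "s\<^sup>2 * c \<le> s * a" .
    moreover have "0 < s * a" using s0 \<open>\<not> a \<le> 0\<close> by simp
    ultimately have "- 2 * s * a + s\<^sup>2 * c < 0" by linarith
    then show False using key[OF s0] by simp
  qed
  have nn: "\<And>j. 0 \<le> column j Y \<bullet> (X *v column j Y)" using psd_nonneg[OF Xp] by blast
  have "a = (\<Sum>j\<in>UNIV. column j Y \<bullet> (X *v column j Y))" unfolding a_def by (rule inner_mm_columns)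
  moreover have "0 \<le> (\<Sum>j\<in>UNIV. column j Y \<bullet> (X *v column j Y))"
    by (rule sum_nonneg) (use nn in auto)
  ultimately have "(\<Sum>j\<in>UNIV. column j Y \<bullet> (X *v column j Y)) = 0"
    using \<open>a \<le> 0\<close> by linarith
  then have "\<And>j. column j Y \<bullet> (X *v column j Y) = 0"
    using sum_nonneg_eq_0_iff[of UNIV "\<lambda>j. column j Y \<bullet> (X *v column j Y)"] nn by auto
  then have "\<And>j. X *v column j Y = 0" using psd_null[OF Xp] by blast
  then show ?thesis by (simp add: vec_eq_iff mm_column)
qed

lemma block_entry: "(diag_mat a ** (M::real^'n^'n) ** diag_mat b) $ i $ j = a i * M$i$j * b j"
  by (simp add: mm_diag diag_mm)

lemma diag_diag: "(\<And>i. d i * e i = f i) \<Longrightarrow> diag_mat d ** diag_mat e = (diag_mat f :: real^'n^'n)"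
  by (simp add: vec_eq_iff diag_mm diag_entry)

lemma diag_zero: "diag_mat (\<lambda>_. 0) = (0::real^'n^'n)"
  by (simp add: vec_eq_iff diag_entry)

lemma norm_block:
  assumes "\<And>i. \<bar>a i\<bar> \<le> 1" "\<And>j. \<bar>b j\<bar> \<le> 1"
  shows "norm (diag_mat a ** (M::real^'n^'n) ** diag_mat b) \<le> norm M"
proof (rule norm_entry_le)
  fix i j
  have "\<bar>a i * M$i$j * b j\<bar> = \<bar>a i\<bar> * \<bar>M$i$j\<bar> * \<bar>b j\<bar>" by (simp add: abs_mult)
  also have "\<dots> \<le> 1 * \<bar>M$i$j\<bar> * 1"
    using assms(1)[of i] assms(2)[of j] by (intro mult_mono) auto
  finally show "\<bar>(diag_mat a ** M ** diag_mat b) $ i $ j\<bar> \<le> \<bar>M $ i $ j\<bar>"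
    by (simp add: block_entry)
qed

lemma norm_lower_r:
  assumes "\<And>i j. (T::real^'n^'n)$i$j \<noteq> 0 \<Longrightarrow> m \<le> \<bar>d j\<bar>" "0 \<le> m"
  shows "m * norm T \<le> norm (T ** diag_mat d)"
proof (rule norm_entry_mono[OF _ assms(2)])
  fix i j
  show "m * \<bar>T$i$j\<bar> \<le> \<bar>(T ** diag_mat d)$i$j\<bar>"
  proof (cases "T$i$j = 0")
    case False
    then show ?thesis using assms(1)[OF False]
      by (simp add: mm_diag abs_mult mult.commute mult_right_mono)
  qed simp
qed

lemma norm_lower_l:
  assumes "\<And>i j. (T::real^'n^'n)$i$j \<noteq> 0 \<Longrightarrow> m \<le> \<bar>d i\<bar>" "0 \<le> m"
  shows "m * norm T \<le> norm (diag_mat d ** T)"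
proof (rule norm_entry_mono[OF _ assms(2)])
  fix i j
  show "m * \<bar>T$i$j\<bar> \<le> \<bar>(diag_mat d ** T)$i$j\<bar>"
  proof (cases "T$i$j = 0")
    case False
    then show ?thesis using assms(1)[OF False]
      by (simp add: diag_mm abs_mult mult_right_mono)
  qed simp
qed

lemma norm_lower_sylv:
  assumes "\<And>i j. (T::real^'n^'n)$i$j \<noteq> 0 \<Longrightarrow> m \<le> \<bar>e j + d i\<bar>" "0 \<le> m"
  shows "m * norm T \<le> norm (T ** diag_mat e + diag_mat d ** T)"
proof (rule norm_entry_mono[OF _ assms(2)])
  fix i j
  have eq: "(T ** diag_mat e + diag_mat d ** T)$i$j = T$i$j * (e j + d i)"
    by (simp add: mm_diag diag_mm algebra_simps)
  show "m * \<bar>T$i$j\<bar> \<le> \<bar>(T ** diag_mat e + diag_mat d ** T)$i$j\<bar>"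
  proof (cases "T$i$j = 0")
    case False
    then show ?thesis using assms(1)[OF False] unfolding eq
      by (simp add: abs_mult mult.commute mult_right_mono)
  qed simp
qed

lemma norm_sum4: "norm ((a::'a::real_normed_vector) + b + c + d) \<le> norm a + norm b + norm c + norm d"
  by (meson add_mono norm_triangle_ineq order_trans order_refl)

lemma transpose_zero: "transpose (0::real^'n^'n) = 0"
  by (simp add: vec_eq_iff transpose_def)

definition Pos :: "('n \<Rightarrow> real) \<Rightarrow> real^'n^'n" where
  "Pos lam = diag_mat (\<lambda>i. if 0 < lam i then 1 else 0)"
definition Neg :: "('n \<Rightarrow> real) \<Rightarrow> real^'n^'n" where
  "Neg lam = diag_mat (\<lambda>i. if lam i < 0 then 1 else 0)"
definition Lpos :: "('n \<Rightarrow> real) \<Rightarrow> real^'n^'n" where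
  "Lpos lam = diag_mat (\<lambda>i. if 0 < lam i then lam i else 0)"
definition Nneg :: "('n \<Rightarrow> real) \<Rightarrow> real^'n^'n" where
  "Nneg lam = diag_mat (\<lambda>i. if lam i < 0 then - lam i else 0)"
definition OmH :: "('n \<Rightarrow> real) \<Rightarrow> real^'n^'n \<Rightarrow> real^'n^'n" where
  "OmH lam H = (\<chi> a b. Omega lam a b * H$a$b)"
definition Theta_mat :: "('n \<Rightarrow> real) \<Rightarrow> real^'n^'n \<Rightarrow> real^'n^'n" where
  "Theta_mat lam H = (\<chi> i j. if lam i < 0 \<and> 0 < lam j then lam j / (lam j - lam i) * H$i$j else 0)"

lemma lift_l: "A ** B = (C::real^'n^'n) \<Longrightarrow> M ** A ** B = M ** C"
  by (simp add: matrix_mul_assoc[symmetric])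

lemma pos_pos: "Pos lam ** Pos lam = Pos lam"
  unfolding Pos_def by (rule diag_diag) simp
lemma neg_neg: "Neg lam ** Neg lam = Neg lam"
  unfolding Neg_def by (rule diag_diag) simp
lemma pos_neg: "Pos lam ** Neg lam = 0"
  unfolding Pos_def diag_zero[symmetric] Neg_def by (rule diag_diag) simp
lemma neg_pos: "Neg lam ** Pos lam = 0"
  unfolding Pos_def diag_zero[symmetric] Neg_def by (rule diag_diag) simp
lemma pos_L: "Pos lam ** Lpos lam = Lpos lam"
  unfolding Pos_def Lpos_def by (rule diag_diag) simp
lemma L_pos: "Lpos lam ** Pos lam = Lpos lam"
  unfolding Pos_def Lpos_def by (rule diag_diag) simp
lemma neg_L: "Neg lam ** Lpos lam = 0"
  unfolding Neg_def diag_zero[symmetric] Lpos_def by (rule diag_diag) simp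
lemma L_neg: "Lpos lam ** Neg lam = 0"
  unfolding Neg_def diag_zero[symmetric] Lpos_def by (rule diag_diag) simp
lemma neg_N: "Neg lam ** Nneg lam = Nneg lam"
  unfolding Neg_def Nneg_def by (rule diag_diag) simp
lemma N_neg: "Nneg lam ** Neg lam = Nneg lam"
  unfolding Neg_def Nneg_def by (rule diag_diag) simp
lemma pos_N: "Pos lam ** Nneg lam = 0"
  unfolding Pos_def diag_zero[symmetric] Nneg_def by (rule diag_diag) simp
lemma N_pos: "Nneg lam ** Pos lam = 0"
  unfolding Pos_def diag_zero[symmetric] Nneg_def by (rule diag_diag) simp

lemmas blk_prods = pos_pos neg_neg pos_neg neg_pos pos_L L_pos neg_L L_neg neg_N N_neg pos_N N_pos
lemmas blk_prods_l = blk_prods[THEN lift_l]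

lemma tr_blk: "transpose (Pos lam) = Pos lam" "transpose (Neg lam) = Neg lam"
  "transpose (Lpos lam) = Lpos lam" "transpose (Nneg lam) = Nneg lam"
  by (simp_all add: Pos_def Neg_def Lpos_def Nneg_def transpose_diag)

context
  fixes lam :: "'n::finite \<Rightarrow> real"
  assumes nz: "\<And>i. lam i \<noteq> 0"
begin

lemma pos_plus_neg: "Pos lam + Neg lam = mat 1"
  using nz by (auto simp: vec_eq_iff Pos_def Neg_def diag_entry mat_def)

lemma lam_split: "diag_mat lam = Lpos lam - Nneg lam"
  using nz by (auto simp: vec_eq_iff Lpos_def Nneg_def diag_entry)

lemma core_fixed:
  fixes X Y H :: "real^'n^'n" and m :: real
  assumes m0: "0 < m" and mle: "\<And>i. m \<le> \<bar>lam i\<bar>"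
    and sX: "transpose X = X" and sY: "transpose Y = Y" and sH: "transpose H = H"
    and XY: "X ** Y = 0" and XmY: "X - Y = diag_mat lam + H"
    and nXL: "norm (X - Lpos lam) \<le> norm H" and hsmall: "norm H \<le> m / 8"
  defines "c1 \<equiv> 2 * (norm (Nneg lam) + m) / m"
  shows "m * norm (X - Lpos lam - OmH lam H)
         \<le> (4 * c1 * (c1 + 1) + 2 * (3 * c1 + 2)) * norm (Neg lam ** H ** Pos lam) * norm H"
proof -
  define P where "P = Pos lam"
  define N where "N = Neg lam"
  define Lp where "Lp = Lpos lam"
  define Nn where "Nn = Nneg lam"
  define nN where "nN = norm Nn"
  have c1_def': "c1 = 2 * (nN + m) / m" unfolding c1_def nN_def Nn_def ..
  have c1_0: "0 \<le> c1" unfolding c1_def' using m0 by (simp add: nN_def)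
  have PP: "P ** P = P" "M ** P ** P = M ** P" for M
    unfolding P_def by (rule blk_prods, rule blk_prods_l)
  have NN: "N ** N = N" "M ** N ** N = M ** N" for M
    unfolding N_def by (rule blk_prods, rule blk_prods_l)
  have PN: "P ** N = 0" "M ** P ** N = 0" "N ** P = 0" "M ** N ** P = 0" for M
    unfolding N_def P_def using blk_prods_l(3,4) by (simp_all add: blk_prods)
  have PL: "P ** Lp = Lp" "M ** P ** Lp = M ** Lp" "Lp ** P = Lp" "M ** Lp ** P = M ** Lp"
      "N ** Lp = 0" "M ** N ** Lp = 0" "Lp ** N = 0" "M ** Lp ** N = 0" for M
    unfolding N_def P_def Lp_def using blk_prods_l(7,8) by (simp_all add: blk_prods blk_prods_l)
  have PNn: "N ** Nn = Nn" "M ** N ** Nn = M ** Nn" "Nn ** N = Nn" "M ** Nn ** N = M ** Nn"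
      "P ** Nn = 0" "M ** P ** Nn = 0" "Nn ** P = 0" "M ** Nn ** P = 0" for M
    unfolding N_def P_def Nn_def using blk_prods_l(11,12) by (simp_all add: blk_prods blk_prods_l)
  have I: "P + N = mat 1" unfolding P_def N_def by (rule pos_plus_neg)
  have tP: "transpose P = P" "transpose N = N" unfolding P_def N_def by (simp_all add: tr_blk)
  have YX: "Y ** X = 0"
  proof -
    have "transpose (X ** Y) = Y ** X" by (simp add: matrix_transpose_mul sX sY)
    then show ?thesis using XY by (simp add: transpose_zero)
  qed
  have Xeq: "X = Y + (Lp - Nn) + H" using XmY unfolding Lp_def Nn_def lam_split
    by (simp add: algebra_simps)
  define h where "h = norm H"
  define E where "E = X - Lp"
  define F where "F = Y - Nn"
  define B where "B = N ** H ** P"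
  define b where "b = norm B"
  define Y2 where "Y2 = N ** Y ** P"
  define X2 where "X2 = N ** X ** P"
  define X3 where "X3 = N ** X ** N"
  define Y1 where "Y1 = P ** Y ** P"
  define Ep where "Ep = P ** E ** P"
  define Fn where "Fn = N ** F ** N"
  have FE: "F = E - H" unfolding F_def E_def by (subst Xeq) (simp add: algebra_simps)
  have h0: "0 \<le> h" by (simp add: h_def)
  have b0: "0 \<le> b" by (simp add: b_def)
  have nE: "norm E \<le> h" using nXL by (simp add: E_def Lp_def h_def)
  have nF: "norm F \<le> 2 * h"
    using norm_triangle_ineq4[of E H] nE by (simp add: FE h_def)
  have blk_le: "norm (A ** M ** C) \<le> norm M" if "A = P \<or> A = N" "C = P \<or> C = N" for A C M
    using that unfolding P_def N_def Pos_def Neg_def by (auto intro!: norm_block)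
  have nEp: "norm Ep \<le> h" using blk_le[of P P E] nE by (simp add: Ep_def)
  have nFn: "norm Fn \<le> 2 * h" using blk_le[of N N F] nF by (simp add: Fn_def)
  have bh: "b \<le> h" using blk_le[of N P H] by (simp add: b_def B_def h_def)
  have hm: "h \<le> m / 8" using hsmall by (simp add: h_def)
  have hX1: "P ** X ** P = Lp + Ep"
    unfolding Ep_def E_def by (simp add: mm_diff_l mm_diff_r PL PP)
  have hY3: "N ** Y ** N = Nn + Fn"
    unfolding Fn_def F_def by (simp add: mm_diff_l mm_diff_r PNn NN)
  have hX2: "X2 = Y2 + B"
    unfolding X2_def Y2_def B_def
    by (subst Xeq) (simp add: matrix_add_ldistrib mm_add_r mm_diff_l mm_diff_r PL PNn)
  have tY2: "P ** Y ** N = transpose Y2"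
    unfolding Y2_def by (simp add: matrix_transpose_mul tP sY matrix_mul_assoc)
  have tX2: "P ** X ** N = transpose X2"
    unfolding X2_def by (simp add: matrix_transpose_mul tP sX matrix_mul_assoc)
  have split: "A ** M ** M' ** C = (A ** M ** P) ** (P ** M' ** C) + (A ** M ** N) ** (N ** M' ** C)"
    for A M M' C :: "real^'n^'n"
  proof -
    have "A ** M ** M' ** C = A ** M ** (P + N) ** M' ** C" by (simp add: I)
    also have "\<dots> = (A ** M ** P) ** (P ** M' ** C) + (A ** M ** N) ** (N ** M' ** C)"
      by (simp add: matrix_add_ldistrib mm_add_r matrix_mul_assoc PP NN)
    finally show ?thesis .
  qed
  have z1: "N ** Y ** X ** P = 0" using YX by (simp add: matrix_mul_assoc[symmetric])
  have z2: "N ** X ** Y ** N = 0" using XY by (simp add: matrix_mul_assoc[symmetric])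
  have z3: "P ** X ** Y ** P = 0" using XY by (simp add: matrix_mul_assoc[symmetric])
  have eq1: "Y2 ** Lp + Nn ** Y2 = - (Y2 ** Ep + Fn ** Y2 + Nn ** B + Fn ** B)"
  proof -
    have "0 = Y2 ** (Lp + Ep) + (Nn + Fn) ** (Y2 + B)"
      using z1 split[of N Y X P] hX1 hY3 hX2 by (simp add: Y2_def X2_def)
    then have "Y2 ** Lp + Nn ** Y2 + (Y2 ** Ep + Fn ** Y2 + Nn ** B + Fn ** B) = 0"
      by (simp add: matrix_add_ldistrib mm_add_r algebra_simps)
    then show ?thesis using eq_neg_iff_add_eq_0 by blast
  qed
  have m0': "0 \<le> m" using m0 by simp
  have sylv_lb: "m * norm T \<le> norm (T ** Lp + Nn ** T)"
    if supp: "\<And>i j. T$i$j \<noteq> 0 \<Longrightarrow> lam i < 0 \<and> 0 < lam j" for T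
    unfolding Lp_def Lpos_def Nn_def Nneg_def
  proof (rule norm_lower_sylv[OF _ m0'])
    fix i j assume "T$i$j \<noteq> 0"
    then have "lam i < 0" "0 < lam j" using supp by auto
    then show "m \<le> \<bar>(if 0 < lam j then lam j else 0) + (if lam i < 0 then - lam i else 0)\<bar>"
      using mle[of i] mle[of j] m0 by auto
  qed
  have PN_ne: "P \<noteq> N"
  proof
    assume "P = N"
    then have "P ** P = 0" using PN(1) by simp
    then have "P = 0" using PP(1) by simp
    then have "N = mat 1" using I by simp
    then have "(mat 1 :: real^'n^'n) = 0" using \<open>P = N\<close> \<open>P = 0\<close> by simp
    then have "(mat 1 :: real^'n^'n) $ i $ i = (0::real^'n^'n) $ i $ i" by simp
    then show False by (simp add: mat_def)
  qed
  have ent: "(A ** M ** C) $ i $ j = (if A = P then (if 0 < lam i then 1 else 0) else (if lam i < 0 then 1 else 0)) * M$i$j *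
       (if C = P then (if 0 < lam j then 1 else 0) else (if lam j < 0 then 1 else 0))"
    if "A = P \<or> A = N" "C = P \<or> C = N" for A C M i j
  proof -
    show ?thesis using that PN_ne unfolding P_def N_def Pos_def Neg_def
      by (auto simp: block_entry)
  qed
  have Y2e: "Y2$i$j \<noteq> 0 \<Longrightarrow> lam i < 0 \<and> 0 < lam j" for i j
    unfolding Y2_def using ent[of N P Y i j] PN_ne by (auto split: if_splits)
  define y2 where "y2 = norm Y2"
  have y20: "0 \<le> y2" by (simp add: y2_def)
  have nN0: "0 \<le> nN" by (simp add: nN_def)
  have s1: "m * y2 \<le> h * y2 + 2 * h * y2 + nN * b + 2 * h * b"
  proof -
    have "m * y2 \<le> norm (Y2 ** Lp + Nn ** Y2)" unfolding y2_def by (rule sylv_lb) (rule Y2e)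
    also have "\<dots> = norm (Y2 ** Ep + Fn ** Y2 + Nn ** B + Fn ** B)" by (simp only: eq1 norm_minus_cancel)
    also have "\<dots> \<le> norm (Y2 ** Ep) + norm (Fn ** Y2) + norm (Nn ** B) + norm (Fn ** B)"
      by (rule norm_sum4)
    also have "\<dots> \<le> h * y2 + 2 * h * y2 + nN * b + 2 * h * b"
    proof -
      have "norm (Y2 ** Ep) \<le> y2 * norm Ep" unfolding y2_def by (rule norm_mm)
      also have "\<dots> \<le> y2 * h" using nEp y20 by (rule mult_left_mono)
      finally have 1: "norm (Y2 ** Ep) \<le> h * y2" by (simp add: mult.commute)
      have "norm (Fn ** Y2) \<le> norm Fn * y2" unfolding y2_def by (rule norm_mm)
      also have "\<dots> \<le> 2 * h * y2" using nFn y20 by (rule mult_right_mono)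
      finally have 2: "norm (Fn ** Y2) \<le> 2 * h * y2" .
      have 3: "norm (Nn ** B) \<le> nN * b" unfolding nN_def b_def by (rule norm_mm)
      have "norm (Fn ** B) \<le> norm Fn * b" unfolding b_def by (rule norm_mm)
      also have "\<dots> \<le> 2 * h * b" using nFn b0 by (rule mult_right_mono)
      finally have 4: "norm (Fn ** B) \<le> 2 * h * b" .
      show ?thesis using 1 2 3 4 by linarith
    qed
    finally show ?thesis .
  qed
  have hy2: "h * y2 \<le> m * y2 / 8" using mult_right_mono[OF hm y20] by simp
  have hb: "h * b \<le> m * b / 8" using mult_right_mono[OF hm b0] by simp
  have y2c: "y2 \<le> c1 * b"
  proof -
    have "m * y2 \<le> 2 * (nN + m) * b"
      using s1 hy2 hb mult_nonneg_nonneg[OF nN0 b0] mult_nonneg_nonneg[OF m0' b0]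
      by (simp add: algebra_simps)
    then show ?thesis unfolding c1_def' using m0
      by (simp add: pos_le_divide_eq mult.commute)
  qed
  define x2 where "x2 = norm X2"
  have x2c: "x2 \<le> (c1 + 1) * b"
    using norm_triangle_ineq[of Y2 B] y2c unfolding x2_def hX2 y2_def b_def
    by (simp add: algebra_simps)
  define Qc where "Qc = c1 * (c1 + 1)"
  have Qc0: "0 \<le> Qc" unfolding Qc_def using c1_0 by simp
  have x2y2: "x2 * y2 \<le> Qc * (b * h)"
  proof -
    have "x2 * y2 \<le> ((c1 + 1) * b) * (c1 * b)"
      using x2c y2c by (rule mult_mono) (use c1_0 b0 y20 in auto)
    also have "\<dots> = Qc * (b * b)" by (simp add: Qc_def algebra_simps)
    also have "\<dots> \<le> Qc * (b * h)" using Qc0 bh b0 by (simp add: mult_left_mono)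
    finally show ?thesis .
  qed
  have eq2: "X3 ** Nn = - (X2 ** transpose Y2 + X3 ** Fn)"
  proof -
    have "0 = X2 ** transpose Y2 + X3 ** (Nn + Fn)"
      using z2 split[of N X Y N] hY3 tY2 by (simp add: X2_def X3_def)
    then have "X3 ** Nn + (X2 ** transpose Y2 + X3 ** Fn) = 0"
      by (simp add: matrix_add_ldistrib algebra_simps)
    then show ?thesis using eq_neg_iff_add_eq_0 by blast
  qed
  define x3 where "x3 = norm X3"
  have x30: "0 \<le> x3" by (simp add: x3_def)
  have X3e: "X3$i$j \<noteq> 0 \<Longrightarrow> lam j < 0" for i j
    unfolding X3_def using ent[of N N X i j] PN_ne by (auto split: if_splits)
  have s2: "m * x3 \<le> x2 * y2 + 2 * h * x3"
  proof -
    have "m * x3 \<le> norm (X3 ** Nn)"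
      unfolding x3_def Nn_def Nneg_def
    proof (rule norm_lower_r[OF _ m0'])
      fix i j assume "X3$i$j \<noteq> 0"
      then have "lam j < 0" by (rule X3e)
      then show "m \<le> \<bar>if lam j < 0 then - lam j else 0\<bar>" using mle[of j] by auto
    qed
    also have "\<dots> = norm (X2 ** transpose Y2 + X3 ** Fn)" by (simp only: eq2 norm_minus_cancel)
    also have "\<dots> \<le> norm (X2 ** transpose Y2) + norm (X3 ** Fn)" by (rule norm_triangle_ineq)
    also have "\<dots> \<le> x2 * y2 + 2 * h * x3"
    proof -
      have 1: "norm (X2 ** transpose Y2) \<le> x2 * y2"
        using norm_mm[of X2 "transpose Y2"] by (simp add: x2_def y2_def norm_transpose)
      have "norm (X3 ** Fn) \<le> x3 * norm Fn" unfolding x3_def by (rule norm_mm)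
      also have "\<dots> \<le> x3 * (2 * h)" using nFn x30 by (rule mult_left_mono)
      finally show ?thesis using 1 by (simp add: algebra_simps)
    qed
    finally show ?thesis .
  qed
  have x3b: "m * x3 \<le> 2 * Qc * (b * h)"
  proof -
    have "h * x3 \<le> m * x3 / 8" using mult_right_mono[OF hm x30] by simp
    then show ?thesis using s2 x2y2 Qc0 mult_nonneg_nonneg[OF Qc0 mult_nonneg_nonneg[OF b0 h0]]
      by linarith
  qed
  have eq3: "Lp ** Y1 = - (Ep ** Y1 + transpose X2 ** Y2)"
  proof -
    have "0 = (Lp + Ep) ** Y1 + transpose X2 ** Y2"
      using z3 split[of P X Y P] hX1 tX2 by (simp add: Y1_def Y2_def)
    then have "Lp ** Y1 + (Ep ** Y1 + transpose X2 ** Y2) = 0"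
      by (simp add: mm_add_r algebra_simps)
    then show ?thesis using eq_neg_iff_add_eq_0 by blast
  qed
  define y1 where "y1 = norm Y1"
  have y10: "0 \<le> y1" by (simp add: y1_def)
  have Y1e: "Y1$i$j \<noteq> 0 \<Longrightarrow> 0 < lam i" for i j
    unfolding Y1_def using ent[of P P Y i j] by (auto split: if_splits)
  have s3: "m * y1 \<le> h * y1 + x2 * y2"
  proof -
    have "m * y1 \<le> norm (Lp ** Y1)"
      unfolding y1_def Lp_def Lpos_def
    proof (rule norm_lower_l[OF _ m0'])
      fix i j assume "Y1$i$j \<noteq> 0"
      then have "0 < lam i" by (rule Y1e)
      then show "m \<le> \<bar>if 0 < lam i then lam i else 0\<bar>" using mle[of i] by auto
    qed
    also have "\<dots> = norm (Ep ** Y1 + transpose X2 ** Y2)" by (simp only: eq3 norm_minus_cancel)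
    also have "\<dots> \<le> norm (Ep ** Y1) + norm (transpose X2 ** Y2)" by (rule norm_triangle_ineq)
    also have "\<dots> \<le> h * y1 + x2 * y2"
    proof -
      have 1: "norm (transpose X2 ** Y2) \<le> x2 * y2"
        using norm_mm[of "transpose X2" Y2] by (simp add: x2_def y2_def norm_transpose)
      have "norm (Ep ** Y1) \<le> norm Ep * y1" unfolding y1_def by (rule norm_mm)
      also have "\<dots> \<le> h * y1" using nEp y10 by (rule mult_right_mono)
      finally show ?thesis using 1 by simp
    qed
    finally show ?thesis .
  qed
  have y1b: "m * y1 \<le> 2 * Qc * (b * h)"
  proof -
    have "h * y1 \<le> m * y1 / 8" using mult_right_mono[OF hm y10] by simp
    then show ?thesis using s3 x2y2 Qc0 mult_nonneg_nonneg[OF Qc0 mult_nonneg_nonneg[OF b0 h0]]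
      by linarith
  qed
  define Mt where "Mt = Theta_mat lam H"
  define D where "D = X2 - Mt"
  have Be: "B$i$j = (if lam i < 0 \<and> 0 < lam j then H$i$j else 0)" for i j
    unfolding B_def using ent[of N P H i j] PN_ne by auto
  have SB: "B ** Lp = Mt ** Lp + Nn ** Mt"
  proof -
    have "(B ** Lp)$i$j = (Mt ** Lp + Nn ** Mt)$i$j" for i j
    proof (cases "lam i < 0 \<and> 0 < lam j")
      case True
      then have t: "lam j / (lam j - lam i) * (lam j - lam i) = lam j" by simp
      have "(Mt ** Lp + Nn ** Mt)$i$j
          = (lam j / (lam j - lam i) * H$i$j) * lam j + (- lam i) * (lam j / (lam j - lam i) * H$i$j)"
        using True by (simp add: Lp_def Lpos_def Nn_def Nneg_def mm_diag diag_mm Mt_def Theta_mat_def)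
      also have "\<dots> = (lam j / (lam j - lam i) * (lam j - lam i)) * H$i$j"
      proof -
        have gen: "\<And>t::real. (t * x) * lj + (- li) * (t * x) = (t * (lj - li)) * x" for x lj li
          by (simp add: algebra_simps)
        show ?thesis by (rule gen)
      qed
      also have "\<dots> = (B ** Lp)$i$j" using True t by (simp add: Lp_def Lpos_def mm_diag Be)
      finally show ?thesis by simp
    next
      case False
      then show ?thesis
        by (simp add: Lp_def Lpos_def Nn_def Nneg_def mm_diag diag_mm Be Mt_def Theta_mat_def)
    qed
    then show ?thesis by (simp add: vec_eq_iff)
  qed
  have eq4: "D ** Lp + Nn ** D = - (Y2 ** Ep + Fn ** Y2 + Fn ** B)"
  proof -
    have "D ** Lp + Nn ** D = (Y2 ** Lp + Nn ** Y2) + Nn ** B + (B ** Lp - (Mt ** Lp + Nn ** Mt))"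
      unfolding D_def hX2
      by (simp add: mm_add_r mm_diff_r matrix_add_ldistrib mm_diff_l algebra_simps)
    also have "\<dots> = - (Y2 ** Ep + Fn ** Y2 + Fn ** B)" unfolding eq1 SB by (simp add: algebra_simps)
    finally show ?thesis .
  qed
  have De: "D$i$j \<noteq> 0 \<Longrightarrow> lam i < 0 \<and> 0 < lam j" for i j
    unfolding D_def X2_def Mt_def Theta_mat_def using ent[of N P X i j] PN_ne
    by (auto split: if_splits)
  define d where "d = norm D"
  have db: "m * d \<le> (3 * c1 + 2) * (b * h)"
  proof -
    have "m * d \<le> norm (D ** Lp + Nn ** D)" unfolding d_def by (rule sylv_lb) (rule De)
    also have "\<dots> = norm (Y2 ** Ep + Fn ** Y2 + Fn ** B)" by (simp only: eq4 norm_minus_cancel)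
    also have "\<dots> \<le> norm (Y2 ** Ep) + norm (Fn ** Y2) + norm (Fn ** B)"
      by (meson add_mono norm_triangle_ineq order_trans order_refl)
    also have "\<dots> \<le> h * y2 + 2 * h * y2 + 2 * h * b"
    proof -
      have "norm (Y2 ** Ep) \<le> y2 * norm Ep" unfolding y2_def by (rule norm_mm)
      also have "\<dots> \<le> y2 * h" using nEp y20 by (rule mult_left_mono)
      finally have 1: "norm (Y2 ** Ep) \<le> h * y2" by (simp add: mult.commute)
      have "norm (Fn ** Y2) \<le> norm Fn * y2" unfolding y2_def by (rule norm_mm)
      also have "\<dots> \<le> 2 * h * y2" using nFn y20 by (rule mult_right_mono)
      finally have 2: "norm (Fn ** Y2) \<le> 2 * h * y2" .
      have "norm (Fn ** B) \<le> norm Fn * b" unfolding b_def by (rule norm_mm)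
      also have "\<dots> \<le> 2 * h * b" using nFn b0 by (rule mult_right_mono)
      finally have 4: "norm (Fn ** B) \<le> 2 * h * b" .
      show ?thesis using 1 2 4 by linarith
    qed
    also have "\<dots> \<le> (3 * c1 + 2) * (b * h)"
    proof -
      have "h * y2 \<le> h * (c1 * b)" using y2c h0 by (rule mult_left_mono)
      then show ?thesis by (simp add: algebra_simps)
    qed
    finally show ?thesis .
  qed
  have sXe: "X$j$i = X$i$j" for i j using sX by (metis transpose_entry)
  have sHe: "H$j$i = H$i$j" for i j using sH by (metis transpose_entry)
  have Ye: "Y$i$j = X$i$j - (if i = j then lam i else 0) - H$i$j" for i j
  proof -
    have "Y = X - diag_mat lam - H" using XmY by (simp add: algebra_simps)
    then show ?thesis by (simp add: diag_entry)
  qed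
  have Gid: "X - Lp - OmH lam H = Y1 + D + transpose D + X3"
  proof -
    have "(X - Lp - OmH lam H)$i$j = (Y1 + D + transpose D + X3)$i$j" for i j
    proof -
      have e1: "Y1$i$j = (if 0 < lam i \<and> 0 < lam j then Y$i$j else 0)"
        unfolding Y1_def using ent[of P P Y i j] by auto
      have e2: "D$i$j = (if lam i < 0 \<and> 0 < lam j then X$i$j - lam j / (lam j - lam i) * H$i$j else 0)"
        unfolding D_def X2_def Mt_def Theta_mat_def using ent[of N P X i j] PN_ne by auto
      have e3: "D$j$i = (if lam j < 0 \<and> 0 < lam i then X$j$i - lam i / (lam i - lam j) * H$j$i else 0)"
        unfolding D_def X2_def Mt_def Theta_mat_def using ent[of N P X j i] PN_ne by auto
      have e4: "X3$i$j = (if lam i < 0 \<and> lam j < 0 then X$i$j else 0)"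
        unfolding X3_def using ent[of N N X i j] PN_ne by auto
      have e5: "Lp$i$j = (if i = j \<and> 0 < lam i then lam i else 0)"
        by (simp add: Lp_def Lpos_def diag_entry)
      show ?thesis
        using nz[of i] nz[of j]
        by (cases "0 < lam i"; cases "0 < lam j")
           (auto simp: e1 e2 e3 e4 e5 Ye transpose_entry OmH_def Omega_def sXe[of i j] sHe[of i j])
    qed
    then show ?thesis by (simp add: vec_eq_iff)
  qed
  have "m * norm (X - Lp - OmH lam H) \<le> m * (y1 + d + d + x3)"
  proof -
    have "norm (X - Lp - OmH lam H) \<le> y1 + d + d + x3"
      unfolding Gid y1_def d_def x3_def
      using norm_sum4[of Y1 D "transpose D" X3] by (simp add: norm_transpose)
    then show ?thesis using m0' by (rule mult_left_mono)
  qed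
  also have "\<dots> \<le> (4 * c1 * (c1 + 1) + 2 * (3 * c1 + 2)) * (b * h)"
    using y1b x3b db unfolding Qc_def by (simp add: algebra_simps)
  finally show ?thesis unfolding b_def h_def B_def N_def P_def Lp_def
    by (simp add: mult.assoc)
qed

end

lemma mat_sum_entry: "(sum f S :: real^'n^'n) $ a $ b = (\<Sum>x\<in>S. f x $ a $ b)"
  by simp

lemma sym_Aadj: "(\<forall>i. sym_mat (A i)) \<Longrightarrow> transpose (Aadj A y) = Aadj A y"
  by (simp add: vec_eq_iff transpose_def Aadj_def sym_mat_iff)

lemma sym_Pop: "(\<forall>i. sym_mat (A i)) \<Longrightarrow> transpose (Pop A M) = Pop A M"
  unfolding Pop_def by (rule sym_Aadj)

lemma sym_step:
  assumes "\<forall>i. sym_mat (A i)" "sym_mat C" "transpose Z = Z"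
  shows "transpose (admm_step A b C \<sigma> Z) = admm_step A b C \<sigma> Z"
  using assms sym_Pop[OF assms(1)] sym_Aadj[OF assms(1)] psd_sym[OF proj_in[of Z]]
  by (simp add: admm_step_def transpose_add transpose_diff transpose_scalar sym_mat_def)

lemma linear_Pop: "linear (Pop A)"
proof -
  have l1: "linear (Aop A)"
    by (rule linearI) (simp_all add: Aop_def vec_eq_iff inner_add_right)
  have l2: "linear (Aadj A)"
    by (rule linearI) (simp_all add: Aadj_def scaleR_add_left sum.distrib scaleR_sum_right)
  have "Pop A = Aadj A \<circ> (\<lambda>v. matrix_inv (AAadj A) *v v) \<circ> Aop A"
    by (simp add: fun_eq_iff Pop_def)
  then show ?thesis
    using linear_compose[OF linear_compose[OF l1 matrix_vector_mul_linear] l2] by (simp add: comp_assoc)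
qed

lemma Pop_bound: obtains KP where "KP > 0" "\<And>W. norm (Pop A W) \<le> KP * norm W"
  using linear_bounded_pos[OF linear_Pop] by blast

lemma diag_quad: "v \<bullet> (diag_mat d *v v) = (\<Sum>i\<in>UNIV. d i * (v$i)\<^sup>2)"
  by (simp add: inner_vec_def matrix_vector_mult_def diag_entry if_distrib if_distribR
      sum.delta cong: if_cong) (simp add: power2_eq_square mult_ac)

lemma diag_inner: "diag_mat d \<bullet> (M::real^'n^'n) = (\<Sum>i\<in>UNIV. d i * M$i$i)"
  by (simp add: inner_mat diag_entry if_distrib if_distribR sum.delta cong: if_cong)

lemma entry_quad: "(M::real^'n^'n)$i$i = axis i 1 \<bullet> (M *v axis i 1)"
  by (simp add: inner_vec_def matrix_vector_mult_def axis_def if_distrib if_distribR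
      sum.delta cong: if_cong)

lemma conj_inner:
  "((Q::real^'n^'n) ** A ** transpose Q) \<bullet> B = A \<bullet> (transpose Q ** B ** Q)"
proof -
  have "trace (Q ** transpose A ** transpose Q ** B) = trace (transpose A ** transpose Q ** B ** Q)"
    by (metis trace_mul_sym matrix_mul_assoc)
  then show ?thesis
    by (simp add: inner_trace matrix_transpose_mul matrix_mul_assoc)
qed

lemma orth_QtQ: "orthogonal_matrix Q \<Longrightarrow> transpose Q ** Q = mat 1"
  by (simp add: orthogonal_matrix_def)
lemma orth_QQt: "orthogonal_matrix Q \<Longrightarrow> Q ** transpose Q = mat 1"
  by (simp add: orthogonal_matrix_def)

lemma conj_psd:
  fixes W Q :: "real^'n^'n"
  assumes "W \<in> psd_cone" shows "0 \<le> v \<bullet> ((transpose Q ** W ** Q) *v v)"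
proof -
  have "v \<bullet> ((transpose Q ** W ** Q) *v v) = v \<bullet> (transpose Q *v (W *v (Q *v v)))"
    by (simp only: matrix_vector_mul_assoc matrix_mul_assoc)
  also have "\<dots> = (transpose (transpose Q) *v v) \<bullet> (W *v (Q *v v))" by (rule dot_mv)
  finally have "v \<bullet> ((transpose Q ** W ** Q) *v v) = (Q *v v) \<bullet> (W *v (Q *v v))" by simp
  then show ?thesis using psd_nonneg[OF assms] by simp
qed

lemma proj_star:
  fixes lam :: "'n::finite \<Rightarrow> real"
  assumes nz: "\<And>i. lam i \<noteq> 0" and orth: "orthogonal_matrix Q"
  shows "proj_psd (Q ** diag_mat lam ** transpose Q) = Q ** Lpos lam ** transpose Q"
proof (rule proj_unique)
  let ?Lp = "Lpos lam" and ?Nn = "Nneg lam"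
  show "Q ** ?Lp ** transpose Q \<in> psd_cone"
  proof -
    have "transpose (Q ** ?Lp ** transpose Q) = Q ** ?Lp ** transpose Q"
      by (simp add: matrix_transpose_mul tr_blk matrix_mul_assoc)
    moreover have "0 \<le> x \<bullet> ((Q ** ?Lp ** transpose Q) *v x)" for x
    proof -
      have "x \<bullet> ((Q ** ?Lp ** transpose Q) *v x) = (transpose Q *v x) \<bullet> (?Lp *v (transpose Q *v x))"
        by (simp only: matrix_vector_mul_assoc[symmetric] dot_mv)
      also have "\<dots> \<ge> 0" unfolding Lpos_def diag_quad by (intro sum_nonneg) auto
      finally show ?thesis .
    qed
    ultimately show ?thesis by (simp add: psd_cone_def sym_mat_def)
  qed
  fix W :: "real^'n^'n" assume W: "W \<in> psd_cone"
  have d: "Q ** diag_mat lam ** transpose Q - Q ** ?Lp ** transpose Q = - (Q ** ?Nn ** transpose Q)"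
  proof -
    have ls: "diag_mat lam = Lpos lam - Nneg lam" by (rule lam_split) (rule nz)
    show ?thesis by (simp add: ls mm_diff_l mm_diff_r)
  qed
  have "(Q ** diag_mat lam ** transpose Q - Q ** ?Lp ** transpose Q) \<bullet> (W - Q ** ?Lp ** transpose Q)
      = - (?Nn \<bullet> (transpose Q ** W ** Q)) + ?Nn \<bullet> (transpose Q ** (Q ** ?Lp ** transpose Q) ** Q)"
    unfolding d by (simp add: inner_diff_right conj_inner)
  also have "transpose Q ** (Q ** ?Lp ** transpose Q) ** Q = ?Lp"
    using orth by (simp add: matrix_mul_assoc orth_QtQ) (simp add: matrix_mul_assoc[symmetric] orth_QtQ)
  also have "?Nn \<bullet> ?Lp = 0"
    unfolding Nneg_def diag_inner by (simp add: Lpos_def diag_entry) (rule sum.neutral, auto)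
  also have "?Nn \<bullet> (transpose Q ** W ** Q) \<ge> 0"
    unfolding Nneg_def diag_inner
  proof (intro sum_nonneg)
    fix i
    have "0 \<le> (transpose Q ** W ** Q)$i$i"
      unfolding entry_quad[of "transpose Q ** W ** Q"] by (rule conj_psd[OF W])
    then show "0 \<le> (if lam i < 0 then - lam i else 0) * (transpose Q ** W ** Q)$i$i"
      by simp
  qed
  then show "(Q ** diag_mat lam ** transpose Q - Q ** ?Lp ** transpose Q) \<bullet> (W - Q ** ?Lp ** transpose Q) \<le> 0"
    using calculation by simp
qed

lemma conj_norm1: "orthogonal_matrix Q \<Longrightarrow> norm (transpose Q ** M ** Q) = norm (M::real^'n^'n)"
  using norm_orth_r[of Q "transpose Q ** M"] norm_orth_l[of "transpose Q" M] by simp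
lemma conj_norm2: "orthogonal_matrix Q \<Longrightarrow> norm (Q ** M ** transpose Q) = norm (M::real^'n^'n)"
  using norm_orth_r[of "transpose Q" "Q ** M"] norm_orth_l[of Q M] by simp

lemma sum_filter_univ: "(\<Sum>b\<in>{b. P b}. f b) = (\<Sum>b\<in>(UNIV::'n::finite set). if P b then f b else 0)"
  using sum.inter_filter[of "UNIV::'n set" f P] by simp

lemma HO_eq: "HO_norm Q lam H = norm (Neg lam ** (transpose Q ** H ** Q) ** Pos lam)"
proof -
  define Hh where "Hh = transpose Q ** H ** Q"
  define S where "S = (\<Sum>a\<in>{a. lam a < 0}. \<Sum>b\<in>{b. 0 < lam b}. (Hh$a$b)\<^sup>2)"
  have e: "(Neg lam ** Hh ** Pos lam) $ a $ b = (if lam a < 0 then 1 else 0) * Hh$a$b * (if 0 < lam b then 1 else 0)" for a b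
    unfolding Neg_def Pos_def by (rule block_entry)
  have "(norm (Neg lam ** Hh ** Pos lam))\<^sup>2
      = (\<Sum>a\<in>UNIV. \<Sum>b\<in>UNIV. if lam a < 0 then (if 0 < lam b then (Hh$a$b)\<^sup>2 else 0) else 0)"
    unfolding norm_sq_mat e
    by (intro sum.cong refl) simp
  also have "\<dots> = S"
    unfolding S_def sum_filter_univ
  proof (intro sum.cong refl)
    fix a
    show "(\<Sum>b\<in>UNIV. if lam a < 0 then (if 0 < lam b then (Hh$a$b)\<^sup>2 else 0) else 0)
        = (if lam a < 0 then \<Sum>b\<in>UNIV. if 0 < lam b then (Hh$a$b)\<^sup>2 else 0 else 0)"
      by (cases "lam a < 0") simp_all
  qed
  finally have n2: "(norm (Neg lam ** Hh ** Pos lam))\<^sup>2 = S" .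
  have S0: "0 \<le> S" unfolding S_def by (intro sum_nonneg) simp
  have "HO_norm Q lam H = sqrt S" unfolding HO_norm_def S_def Hh_def ..
  also have "\<dots> = norm (Neg lam ** Hh ** Pos lam)" unfolding n2[symmetric] by simp
  finally show ?thesis unfolding Hh_def .
qed

theorem proposition2:
  fixes lam :: "'n::{finite,linorder} \<Rightarrow> real"
    and A :: "'m::finite \<Rightarrow> ((real, 'n) vec, 'n) vec"
    and b :: "real^'m" and C :: "((real, 'n) vec, 'n) vec" and \<sigma> :: real
    and Z :: "nat \<Rightarrow> ((real, 'n) vec, 'n) vec"
    and Xs Ss :: "((real, 'n) vec, 'n) vec" and ys :: "real^'m"
    and Q :: "((real, 'n) vec, 'n) vec"
  assumes symC: "sym_mat C"
    and symA: "\<forall>i. sym_mat (A i)"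
    and surjA: "\<forall>v. \<exists>X. sym_mat X \<and> Aop A X = v"
    and sigma_pos: "0 < \<sigma>"
    and symZ0: "sym_mat (Z 0)"
    and iter: "\<forall>k. Z (Suc k) = admm_step A b C \<sigma> (Z k)"
    and kkt: "KKT A b C Xs ys Ss"
    and conv: "Z \<longlonglongrightarrow> Xs - \<sigma> *\<^sub>R Ss"
    and strict_compl: "rank Xs + rank Ss = card (UNIV :: 'n set)"
    and orthQ: "orthogonal_matrix Q"
    and eig: "Xs - \<sigma> *\<^sub>R Ss = Q ** diag_mat lam ** transpose Q"
    and sorted: "\<forall>i j. i \<le> j \<longrightarrow> lam j \<le> lam i"
    and pos: "card {i. 0 < lam i} = rank Xs"
    and nonzero: "\<forall>i. lam i \<noteq> 0"
  shows "\<exists>kbar::nat. \<exists>\<alpha>>0. \<forall>k\<ge>kbar.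
           norm ((let Zst = Xs - \<sigma> *\<^sub>R Ss;
                      W = proj_psd (Z k) - proj_psd Zst - Dop Q lam (Z k - Zst)
                  in W - 2 *\<^sub>R Pop A W))
           \<le> \<alpha> * HO_norm Q lam (Z k - (Xs - \<sigma> *\<^sub>R Ss)) * norm (Z k - (Xs - \<sigma> *\<^sub>R Ss))"
proof -
  have nz: "\<And>i. lam i \<noteq> 0" using nonzero by blast
  define Zs where "Zs = Xs - \<sigma> *\<^sub>R Ss"
  have Zs_eq: "Zs = Q ** diag_mat lam ** transpose Q" using eig Zs_def by simp
  have symZ: "transpose (Z k) = Z k" for k
  proof (induction k)
    case 0
    then show ?case using symZ0 by (simp add: sym_mat_def)
  next
    case (Suc k)
    then show ?case using iter sym_step[OF symA symC Suc] by simp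
  qed
  have orthT: "orthogonal_matrix (transpose Q)" using orthQ by simp
  have projZs: "proj_psd Zs = Q ** Lpos lam ** transpose Q"
    unfolding Zs_eq by (rule proj_star[OF nz orthQ])
  have QQt: "M ** Q ** transpose Q = M" for M :: "((real, 'n) vec, 'n) vec"
    using lift_l[OF orth_QQt[OF orthQ], of M] by simp
  have QtQ: "M ** transpose Q ** Q = M" for M :: "((real, 'n) vec, 'n) vec"
    using lift_l[OF orth_QtQ[OF orthQ], of M] by simp
  have QtQ0: "transpose Q ** Q = mat 1" by (rule orth_QtQ[OF orthQ])
  have QQt0: "Q ** transpose Q = mat 1" by (rule orth_QQt[OF orthQ])
  define m where "m = Min (range (\<lambda>i. \<bar>lam i\<bar>))"
  have "m \<in> range (\<lambda>i. \<bar>lam i\<bar>)" unfolding m_def by (rule Min_in) auto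
  then have m0: "0 < m" using nz by auto
  have mle: "m \<le> \<bar>lam i\<bar>" for i unfolding m_def by (rule Min_le) auto
  define c1 where "c1 = 2 * (norm (Nneg lam) + m) / m"
  have c10: "0 \<le> c1" unfolding c1_def using m0 by simp
  define Kc where "Kc = (4 * c1 * (c1 + 1) + 2 * (3 * c1 + 2)) / m"
  have Kc0: "0 \<le> Kc" unfolding Kc_def using c10 m0 by simp
  obtain KP where KP: "KP > 0" "\<And>W. norm (Pop A W) \<le> KP * norm W" using Pop_bound by blast
  have "\<forall>r>0. \<exists>no. \<forall>n\<ge>no. norm (Z n - Zs) < r" using conv unfolding LIMSEQ_iff Zs_def .
  moreover have "m / 8 > 0" using m0 by simp
  ultimately have "\<exists>no. \<forall>n\<ge>no. norm (Z n - Zs) < m / 8" by blast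
  then obtain kbar where kbar: "\<And>k. k \<ge> kbar \<Longrightarrow> norm (Z k - Zs) < m / 8" by blast
  define \<alpha> where "\<alpha> = (1 + 2 * KP) * (Kc + 1)"
  have \<alpha>0: "0 < \<alpha>" unfolding \<alpha>_def using KP Kc0 by simp
  have main: "norm (W - 2 *\<^sub>R Pop A W) \<le> \<alpha> * HO_norm Q lam (Z k - Zs) * norm (Z k - Zs)"
    if k: "kbar \<le> k" and W_def: "W = proj_psd (Z k) - proj_psd Zs - Dop Q lam (Z k - Zs)" for k W
  proof -
    define H where "H = Z k - Zs"
    define X where "X = proj_psd (Z k)"
    define Y where "Y = X - Z k"
    define Hh where "Hh = transpose Q ** H ** Q"
    define Xh where "Xh = transpose Q ** X ** Q"
    define Yh where "Yh = transpose Q ** Y ** Q"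
    have XY: "X ** Y = 0" unfolding X_def Y_def by (rule proj_compl[OF symZ])
    have sX: "transpose X = X" unfolding X_def by (rule psd_sym[OF proj_in])
    have sY: "transpose Y = Y" unfolding Y_def by (simp add: transpose_diff sX symZ)
    have sZs: "transpose Zs = Zs"
      by (simp add: Zs_eq matrix_transpose_mul matrix_mul_assoc transpose_diag)
    have sH: "transpose H = H" unfolding H_def by (simp add: transpose_diff symZ sZs)
    have sXh: "transpose Xh = Xh" unfolding Xh_def by (simp add: matrix_transpose_mul sX matrix_mul_assoc)
    have sYh: "transpose Yh = Yh" unfolding Yh_def by (simp add: matrix_transpose_mul sY matrix_mul_assoc)
    have sHh: "transpose Hh = Hh" unfolding Hh_def by (simp add: matrix_transpose_mul sH matrix_mul_assoc)
    have XYh: "Xh ** Yh = 0"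
    proof -
      have "Xh ** Yh = transpose Q ** (X ** Y) ** Q"
        unfolding Xh_def Yh_def by (simp add: matrix_mul_assoc QQt)
      then show ?thesis using XY by simp
    qed
    have ZsL: "transpose Q ** Zs ** Q = diag_mat lam"
      unfolding Zs_eq by (simp add: matrix_mul_assoc QtQ0 QtQ)
    have XstL: "transpose Q ** (Q ** Lpos lam ** transpose Q) ** Q = Lpos lam"
      by (simp add: matrix_mul_assoc QtQ0 QtQ)
    have XmYh: "Xh - Yh = diag_mat lam + Hh"
    proof -
      have "Xh - Yh = transpose Q ** (Zs + H) ** Q"
        unfolding Xh_def Yh_def Y_def H_def by (simp add: mm_diff_l mm_diff_r)
      also have "\<dots> = transpose Q ** Zs ** Q + Hh"
        unfolding Hh_def by (simp add: matrix_add_ldistrib mm_add_r)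
      finally show ?thesis using ZsL by simp
    qed
    have nHh: "norm Hh = norm H" unfolding Hh_def by (rule conj_norm1[OF orthQ])
    have nXL: "norm (Xh - Lpos lam) \<le> norm Hh"
    proof -
      have "Xh - Lpos lam = Xh - transpose Q ** (Q ** Lpos lam ** transpose Q) ** Q"
        by (simp only: XstL)
      also have "\<dots> = transpose Q ** (X - proj_psd Zs) ** Q"
        unfolding Xh_def projZs by (simp only: mm_diff_l mm_diff_r)
      finally have "Xh - Lpos lam = transpose Q ** (X - proj_psd Zs) ** Q" .
      then have "norm (Xh - Lpos lam) = norm (proj_psd (Z k) - proj_psd Zs)"
        using conj_norm1[OF orthQ] X_def by simp
      also have "\<dots> \<le> norm (Z k - Zs)" by (rule proj_lip)
      finally show ?thesis using nHh H_def by simp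
    qed
    have hsmall: "norm Hh \<le> m / 8" using kbar[OF k] nHh H_def by simp
    have core: "m * norm (Xh - Lpos lam - OmH lam Hh)
        \<le> (4 * c1 * (c1 + 1) + 2 * (3 * c1 + 2)) * norm (Neg lam ** Hh ** Pos lam) * norm Hh"
      unfolding c1_def
      by (rule core_fixed[OF nz m0 mle sXh sYh sHh XYh XmYh nXL hsmall])
    have Wid: "W = Q ** (Xh - Lpos lam - OmH lam Hh) ** transpose Q"
    proof -
      have "Q ** Xh ** transpose Q = X"
        unfolding Xh_def by (simp add: matrix_mul_assoc QQt0 QQt)
      moreover have "Dop Q lam (Z k - Zs) = Q ** OmH lam Hh ** transpose Q"
        unfolding Dop_def OmH_def Hh_def H_def ..
      ultimately show ?thesis
        unfolding W_def X_def projZs by (simp add: mm_diff_l mm_diff_r)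
    qed
    define g where "g = norm (Xh - Lpos lam - OmH lam Hh)"
    define ho where "ho = HO_norm Q lam (Z k - Zs)"
    define h where "h = norm (Z k - Zs)"
    have ho_eq: "ho = norm (Neg lam ** Hh ** Pos lam)" unfolding ho_def Hh_def H_def by (rule HO_eq)
    have nW: "norm W = g" unfolding Wid g_def by (rule conj_norm2[OF orthQ])
    have ho0: "0 \<le> ho" unfolding ho_eq by simp
    have h0: "0 \<le> h" unfolding h_def by simp
    have gK: "g \<le> Kc * ho * h"
    proof -
      have "m * g \<le> (4 * c1 * (c1 + 1) + 2 * (3 * c1 + 2)) * ho * h"
        using core unfolding g_def ho_eq h_def nHh H_def .
      then show ?thesis unfolding Kc_def using m0
        by (simp add: pos_le_divide_eq field_simps)
    qed
    have "norm (W - 2 *\<^sub>R Pop A W) \<le> norm W + norm (2 *\<^sub>R Pop A W)" by (rule norm_triangle_ineq4)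
    also have "\<dots> \<le> g + 2 * (KP * g)" using KP(2)[of W] nW by simp
    also have "\<dots> = (1 + 2 * KP) * g" by (simp add: algebra_simps)
    also have "\<dots> \<le> (1 + 2 * KP) * (Kc * ho * h)" using gK KP(1) by (simp add: mult_left_mono)
    also have "\<dots> \<le> (1 + 2 * KP) * ((Kc + 1) * ho * h)"
      using KP(1) ho0 h0 by (intro mult_left_mono mult_right_mono) auto
    also have "\<dots> = \<alpha> * ho * h" unfolding \<alpha>_def by (simp add: algebra_simps)
    finally show ?thesis unfolding ho_def h_def .
  qed
  show ?thesis
    using main \<alpha>0 unfolding Let_def Zs_def[symmetric]
    by blast
qed

end
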